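(* Let $X$ be a countably infinite set, $\mathscr{A}=2^X$, $\mu$ a measure on $\mathscr{A}$ with $\mu(x):=\mu(\{x\})<\infty$ for all $x\in X$, and $\phi$ an injective nonsingular transformation of $X$. Assume $P\colon X\times\mathfrak{B}(\mathbb{R}_+)\to[0,1]$ is a family of probability measures satisfying (CC): $\mathsf{E}(P(\cdot,\sigma))(x)=\dfrac{\int_\sigma t\,P(\phi(x),\mathrm{d}t)}{\mathsf{h}_\phi(\phi(x))}$ for $\mu$-a.e. $x\in X$, for every $\sigma\in\mathfrak{B}(\mathbb{R}_+)$. Then (i) $\int_\sigma t^n P(\phi^n(x),\mathrm{d}t)=\mathsf{h}_{\phi^n}(\phi^n(x))\cdot P(x,\sigma)$ for all $\sigma\in\mathfrak{B}(\mathbb{R}_+)$, $n\in\mathbb{Z}_+$ and $x\in X$ with $\mu(x)>0$. Moreover, if $\mu(x)>0$ for every $x\in X$, then (ii) $\int_\sigma t^nP(x,\mathrm{d}t)=\mathsf{h}_{\phi^n}(x)\cdot P\big((\phi^n)^{-1}(x),\sigma\big)$ for all $\sigma\in\mathfrak{B}(\mathbb{R}_+)$, $x\in\phi^n(X)$ and $n\in\mathbb{Z}_+$.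
   Context: $\mathbb{R}_+=[0,\infty)$, $\mathbb{Z}_+=\{0,1,\dots\}$. $\phi$ nonsingular means $\mu(\phi^{-1}(\{x\}))=0$ whenever $\mu(x)=0$. $\phi^n$ is the $n$-fold composition and $\mathsf{h}_{\phi^n}(x)=\mu(\phi^{-n}(\{x\}))/\mu(x)$, with $\mathsf{h}_{\phi^n}(x)=1$ if $\mu(x)=0$ (convention $0/0=1$; also $1/0=\infty$, $0\cdot\infty=0$). $\mathsf{E}(f)$ is the conditional expectation of $f\colon X\to[0,\infty]$ w.r.t. the $\sigma$-algebra $\phi^{-1}(2^X)$: the a.e. unique $\phi^{-1}(2^X)$-measurable function with $\int(g\circ\phi)f\,\mathrm{d}\mu=\int(g\circ\phi)\mathsf{E}(f)\,\mathrm{d}\mu$ for all $g\colon X\to[0,\infty]$. A family of probability measures: each $P(x,\cdot)$ is a Borel probability measure on $\mathbb{R}_+$. *)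

theory Defs
  imports "HOL-Probability.Probability"
begin

definition hphi :: "'a measure \<Rightarrow> ('a \<Rightarrow> 'a) \<Rightarrow> 'a \<Rightarrow> ennreal" where
  "hphi M f x = (if emeasure M {x} = 0 then 1 else emeasure M (f -` {x}) / emeasure M {x})"

definition condexp :: "'a measure \<Rightarrow> ('a \<Rightarrow> 'a) \<Rightarrow> ('a \<Rightarrow> ennreal) \<Rightarrow> 'a \<Rightarrow> ennreal" where
  "condexp M f g = nn_cond_exp M (vimage_algebra UNIV f (count_space UNIV)) g"

end

theory Submission
  imports Defs
begin

lemma AE_point:
  assumes "AE x in M. Q x" "emeasure M {x} > 0" "space M = UNIV" "sets M = Pow UNIV"
  shows "Q x"
proof (rule ccontr)
  assume nq: "\<not> Q x"
  from assms(1) obtain N where N: "{x \<in> space M. \<not> Q x} \<subseteq> N" "emeasure M N = 0" "N \<in> sets M"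
    by (rule AE_E)
  have "{x} \<subseteq> N" using N(1) nq assms(3) by auto
  then have "emeasure M {x} \<le> emeasure M N" using N(3) assms(4) by (intro emeasure_mono) auto
  then show False using N(2) assms(2) by simp
qed

lemma condexp_id:
  fixes M :: "'a measure"
  assumes X_countable: "countable (UNIV :: 'a set)"
    and space_M: "space M = UNIV"
    and sets_M: "sets M = Pow UNIV"
    and finite_pts: "\<And>x. emeasure M {x} < \<infinity>"
    and inj_phi: "inj \<phi>"
  shows "AE x in M. g x = condexp M \<phi> g x"
proof -
  let ?F = "vimage_algebra UNIV \<phi> (count_space UNIV)"
  have setsF: "sets ?F = Pow UNIV"
  proof
    show "sets ?F \<subseteq> Pow UNIV" by auto
    show "Pow UNIV \<subseteq> sets ?F"
    proof
      fix B :: "'a set" assume "B \<in> Pow UNIV"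
      have "\<phi> -` (\<phi> ` B) \<inter> UNIV \<in> sets ?F" by (rule in_vimage_algebra) auto
      then show "B \<in> sets ?F" using inj_vimage_image_eq[OF inj_phi] by simp
    qed
  qed
  have sub: "subalgebra M ?F" unfolding subalgebra_def using setsF space_M sets_M by auto
  have sf: "sigma_finite_measure (restr_to_subalg M ?F)"
  proof (rule sigma_finite_measure.intro, rule exI[of _ "range (\<lambda>x. {x})"], intro conjI)
    show "countable (range (\<lambda>x::'a. {x}))" using X_countable by (intro countable_image)
    show "range (\<lambda>x. {x}) \<subseteq> sets (restr_to_subalg M ?F)"
      using sets_restr_to_subalg[OF sub] setsF by auto
    show "\<Union> (range (\<lambda>x. {x})) = space (restr_to_subalg M ?F)"
      by (simp add: space_restr_to_subalg space_M)
    show "\<forall>a\<in>range (\<lambda>x. {x}). emeasure (restr_to_subalg M ?F) a \<noteq> \<infinity>"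
      proof
      fix a assume "a \<in> range (\<lambda>x::'a. {x})"
      then obtain x where ax: "a = {x}" by auto
      have "a \<in> sets ?F" using setsF by simp
      then have "emeasure (restr_to_subalg M ?F) a = emeasure M a" by (rule emeasure_restr_to_subalg[OF sub])
      then show "emeasure (restr_to_subalg M ?F) a \<noteq> \<infinity>" using finite_pts[of x] ax by simp
    qed
  qed
  interpret sigma_finite_subalgebra M ?F using sub sf by (rule sigma_finite_subalgebra.intro)
  have eq: "borel_measurable ?F = (borel_measurable (count_space UNIV) :: ('a \<Rightarrow> ennreal) set)"
    by (rule measurable_cong_sets) (simp_all add: setsF)
  have "g \<in> borel_measurable (count_space UNIV)" by simp
  then have "g \<in> borel_measurable ?F" using eq by simp
  then show ?thesis unfolding condexp_def by (rule nn_cond_exp_F_meas)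
qed

lemma density_step:
  fixes Q R :: "real measure"
  assumes sQ: "sets Q = sets (restrict_space borel {0::real..})"
    and sR: "sets R = sets (restrict_space borel {0::real..})"
    and h0: "h \<noteq> 0" and hinf: "h \<noteq> \<infinity>"
    and rel: "\<And>\<sigma>. \<sigma> \<in> sets (restrict_space borel {0::real..}) \<Longrightarrow>
       emeasure R \<sigma> = (\<integral>\<^sup>+ t \<in> \<sigma>. ennreal t \<partial>Q) / h"
    and \<sigma>: "\<sigma> \<in> sets (restrict_space borel {0::real..})"
  shows "(\<integral>\<^sup>+ t \<in> \<sigma>. ennreal (t ^ Suc n) \<partial>Q) = h * (\<integral>\<^sup>+ t \<in> \<sigma>. ennreal (t ^ n) \<partial>R)"
proof -
  have spQ: "space Q = {0..}" using sets_eq_imp_space_eq[OF sQ] by simp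
  have spR: "space R = {0..}" using sets_eq_imp_space_eq[OF sR] by simp
  have mQ: "(\<lambda>t. ennreal t) \<in> borel_measurable Q"
    by (subst measurable_cong_sets[OF sQ refl]) (intro measurable_restrict_space1, simp)
  have dens: "density Q (\<lambda>t. ennreal t) = density R (\<lambda>_. h)"
  proof (rule measure_eqI)
    show "sets (density Q (\<lambda>t. ennreal t)) = sets (density R (\<lambda>_. h))" using sQ sR by simp
    fix A assume "A \<in> sets (density Q (\<lambda>t. ennreal t))"
    then have A: "A \<in> sets (restrict_space borel {0::real..})" using sQ by simp
    have "emeasure (density Q (\<lambda>t. ennreal t)) A = (\<integral>\<^sup>+ t \<in> A. ennreal t \<partial>Q)"
      using A sQ mQ by (simp add: emeasure_density)
    also have "\<dots> = h * emeasure R A"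
      using rel[OF A] h0 hinf by (simp add: ennreal_times_divide ennreal_mult_divide_eq mult.commute[of h])
    also have "\<dots> = (\<integral>\<^sup>+ t \<in> A. h \<partial>R)"
      using A sR by (simp add: nn_integral_cmult_indicator)
    also have "\<dots> = emeasure (density R (\<lambda>_. h)) A"
      using A sR by (simp add: emeasure_density)
    finally show "emeasure (density Q (\<lambda>t. ennreal t)) A = emeasure (density R (\<lambda>_. h)) A" .
  qed
  have gQ: "(\<lambda>t. ennreal (t ^ n) * indicator \<sigma> t) \<in> borel_measurable Q"
  proof -
    have a: "(\<lambda>t. ennreal (t^n)) \<in> borel_measurable Q"
      by (subst measurable_cong_sets[OF sQ refl]) (intro measurable_restrict_space1, simp)
    have b: "(indicator \<sigma> :: real \<Rightarrow> ennreal) \<in> borel_measurable Q" using \<sigma> sQ by simp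
    show ?thesis using a b by (rule borel_measurable_times_ennreal)
  qed
  have gR: "(\<lambda>t. ennreal (t ^ n) * indicator \<sigma> t) \<in> borel_measurable R"
  proof -
    have a: "(\<lambda>t. ennreal (t^n)) \<in> borel_measurable R"
      by (subst measurable_cong_sets[OF sR refl]) (intro measurable_restrict_space1, simp)
    have b: "(indicator \<sigma> :: real \<Rightarrow> ennreal) \<in> borel_measurable R" using \<sigma> sR by simp
    show ?thesis using a b by (rule borel_measurable_times_ennreal)
  qed
  have "(\<integral>\<^sup>+ t \<in> \<sigma>. ennreal (t ^ Suc n) \<partial>Q) = (\<integral>\<^sup>+ t. ennreal t * (ennreal (t ^ n) * indicator \<sigma> t) \<partial>Q)"
    by (rule nn_integral_cong) (auto simp: spQ ennreal_mult[symmetric] indicator_def)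
  also have "\<dots> = (\<integral>\<^sup>+ t. ennreal (t ^ n) * indicator \<sigma> t \<partial>density Q (\<lambda>t. ennreal t))"
    using mQ gQ by (simp add: nn_integral_density)
  also have "\<dots> = (\<integral>\<^sup>+ t. ennreal (t ^ n) * indicator \<sigma> t \<partial>density R (\<lambda>_. h))"
    using dens by simp
  also have "\<dots> = (\<integral>\<^sup>+ t. h * (ennreal (t ^ n) * indicator \<sigma> t) \<partial>R)"
    using gR by (simp add: nn_integral_density)
  also have "\<dots> = h * (\<integral>\<^sup>+ t \<in> \<sigma>. ennreal (t ^ n) \<partial>R)"
    using gR by (simp add: nn_integral_cmult)
  finally show ?thesis .
qed

theorem proposition36:
  fixes M :: "'a measure" and \<phi> :: "'a \<Rightarrow> 'a" and P :: "'a \<Rightarrow> real measure"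
  assumes X_countable: "countable (UNIV :: 'a set)"
    and X_infinite: "infinite (UNIV :: 'a set)"
    and space_M: "space M = UNIV"
    and sets_M: "sets M = Pow UNIV"
    and finite_pts: "\<And>x. emeasure M {x} < \<infinity>"
    and inj_phi: "inj \<phi>"
    and nonsingular: "\<And>x. emeasure M {x} = 0 \<Longrightarrow> emeasure M (\<phi> -` {x}) = 0"
    and P_sets: "\<And>x. sets (P x) = sets (restrict_space borel {0::real..})"
    and P_prob: "\<And>x. prob_space (P x)"
    and CC: "\<And>\<sigma>. \<sigma> \<in> sets (restrict_space borel {0::real..}) \<Longrightarrow>
       AE x in M. condexp M \<phi> (\<lambda>y. emeasure (P y) \<sigma>) x
         = (\<integral>\<^sup>+ t \<in> \<sigma>. ennreal t \<partial>P (\<phi> x)) / hphi M \<phi> (\<phi> x)"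
  shows "(\<forall>\<sigma> \<in> sets (restrict_space borel {0::real..}). \<forall>n::nat. \<forall>x. emeasure M {x} > 0 \<longrightarrow>
            (\<integral>\<^sup>+ t \<in> \<sigma>. ennreal (t ^ n) \<partial>P ((\<phi> ^^ n) x))
              = hphi M (\<phi> ^^ n) ((\<phi> ^^ n) x) * emeasure (P x) \<sigma>)
       \<and> ((\<forall>x. emeasure M {x} > 0) \<longrightarrow>
          (\<forall>\<sigma> \<in> sets (restrict_space borel {0::real..}). \<forall>n::nat. \<forall>x \<in> range (\<phi> ^^ n).
            (\<integral>\<^sup>+ t \<in> \<sigma>. ennreal (t ^ n) \<partial>P x)
              = hphi M (\<phi> ^^ n) x * emeasure (P (inv (\<phi> ^^ n) x)) \<sigma>))"
proof -
  let ?S = "sets (restrict_space borel {0::real..})"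
  define m where "m z = enn2real (emeasure M {z})" for z
  have mE: "emeasure M {z} = ennreal (m z)" for z
    using finite_pts[of z] unfolding m_def by (simp add: less_top ennreal_enn2real)
  have m0: "m z \<ge> 0" for z unfolding m_def by simp
  have mpos: "emeasure M {z} > 0 \<longleftrightarrow> m z > 0" for z
    using mE[of z] m0[of z] by (simp add: ennreal_less_zero_iff)
  have vim: "(\<phi>^^n) -` {(\<phi>^^n) y} = {y}" for n y
    using inj_fn[OF inj_phi, of n] by (auto dest: injD)
  have vim1: "\<phi> -` {\<phi> y} = {y}" for y
    using inj_phi by (auto dest: injD)
  have pos1: "emeasure M {\<phi> y} > 0" if "emeasure M {y} > 0" for y
  proof (rule ccontr)
    assume "\<not> emeasure M {\<phi> y} > 0"
    then have "emeasure M {\<phi> y} = 0" by (simp add: not_gr_zero)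
    then have "emeasure M (\<phi> -` {\<phi> y}) = 0" by (rule nonsingular)
    then show False using that vim1 by simp
  qed
  have posn: "emeasure M {(\<phi>^^n) y} > 0" if "emeasure M {y} > 0" for n y
    using that by (induction n) (auto intro: pos1)
  have hn: "hphi M (\<phi>^^n) ((\<phi>^^n) y) = ennreal (m y / m ((\<phi>^^n) y))"
    if "emeasure M {y} > 0" for n y
  proof -
    have p: "m ((\<phi>^^n) y) > 0" using posn[OF that, of n] mpos by simp
    show ?thesis unfolding hphi_def vim using p mE m0[of y]
      by (simp add: divide_ennreal)
  qed
  have h1: "hphi M \<phi> (\<phi> y) = ennreal (m y / m (\<phi> y))" if "emeasure M {y} > 0" for y
  proof -
    have p: "m (\<phi> y) > 0" using pos1[OF that] mpos by simp
    show ?thesis unfolding hphi_def vim1 using p mE m0[of y]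
      by (simp add: divide_ennreal)
  qed
  have CCpt: "emeasure (P y) \<sigma> = (\<integral>\<^sup>+ t \<in> \<sigma>. ennreal t \<partial>P (\<phi> y)) / hphi M \<phi> (\<phi> y)"
    if \<sigma>: "\<sigma> \<in> ?S" and y: "emeasure M {y} > 0" for \<sigma> y
  proof -
    have "AE x in M. (\<lambda>y. emeasure (P y) \<sigma>) x = condexp M \<phi> (\<lambda>y. emeasure (P y) \<sigma>) x"
      by (rule condexp_id[OF X_countable space_M sets_M finite_pts inj_phi])
    moreover have "AE x in M. condexp M \<phi> (\<lambda>y. emeasure (P y) \<sigma>) x
         = (\<integral>\<^sup>+ t \<in> \<sigma>. ennreal t \<partial>P (\<phi> x)) / hphi M \<phi> (\<phi> x)"
      by (rule CC[OF \<sigma>])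
    ultimately have "AE x in M. emeasure (P x) \<sigma> = (\<integral>\<^sup>+ t \<in> \<sigma>. ennreal t \<partial>P (\<phi> x)) / hphi M \<phi> (\<phi> x)"
      by eventually_elim simp
    then show ?thesis by (rule AE_point[OF _ y space_M sets_M])
  qed
  have arith: "ennreal (b / c) * (ennreal (a / b) * p) = ennreal (a / c) * p"
    if "a > 0" "b > 0" "c > 0" for a b c :: real and p :: ennreal
  proof -
    have "ennreal (b / c) * (ennreal (a / b) * p) = ennreal (b / c * (a / b)) * p"
      using that by (subst ennreal_mult) (simp_all add: mult.assoc)
    also have "b / c * (a / b) = a / c" using that by (simp add: field_simps)
    finally show ?thesis .
  qed
  have main: "\<forall>x. emeasure M {x} > 0 \<longrightarrow>
      (\<integral>\<^sup>+ t \<in> \<sigma>. ennreal (t ^ n) \<partial>P ((\<phi> ^^ n) x)) = ennreal (m x / m ((\<phi>^^n) x)) * emeasure (P x) \<sigma>"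
    if \<sigma>: "\<sigma> \<in> ?S" for \<sigma> n
  proof (induction n)
    case 0
    show ?case
    proof (intro allI impI)
      fix x assume x: "emeasure M {x} > 0"
      then have "m x > 0" using mpos by simp
      then show "(\<integral>\<^sup>+ t \<in> \<sigma>. ennreal (t ^ 0) \<partial>P ((\<phi> ^^ 0) x)) = ennreal (m x / m ((\<phi>^^0) x)) * emeasure (P x) \<sigma>"
        using \<sigma> P_sets[of x] by simp
    qed
  next
    case (Suc n)
    show ?case
    proof (intro allI impI)
      fix x assume x: "emeasure M {x} > 0"
      define y where "y = (\<phi>^^n) x"
      have y: "emeasure M {y} > 0" unfolding y_def by (rule posn[OF x])
      have mx: "m x > 0" using x mpos by simp
      have my: "m y > 0" using y mpos by simp
      have mpy: "m (\<phi> y) > 0" using pos1[OF y] mpos by simp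
      have hne0: "hphi M \<phi> (\<phi> y) \<noteq> 0" using h1[OF y] my mpy by simp
      have hntop: "hphi M \<phi> (\<phi> y) \<noteq> \<infinity>" using h1[OF y] by simp
      have "(\<integral>\<^sup>+ t \<in> \<sigma>. ennreal (t ^ Suc n) \<partial>P ((\<phi> ^^ Suc n) x))
          = (\<integral>\<^sup>+ t \<in> \<sigma>. ennreal (t ^ Suc n) \<partial>P (\<phi> y))" unfolding y_def by simp
      also have "\<dots> = hphi M \<phi> (\<phi> y) * (\<integral>\<^sup>+ t \<in> \<sigma>. ennreal (t ^ n) \<partial>P y)"
        by (rule density_step[OF P_sets P_sets hne0 hntop CCpt[OF _ y] \<sigma>])
      also have "\<dots> = ennreal (m y / m (\<phi> y)) * (ennreal (m x / m y) * emeasure (P x) \<sigma>)"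
        using Suc.IH x h1[OF y] unfolding y_def by simp
      also have "\<dots> = ennreal (m x / m (\<phi> y)) * emeasure (P x) \<sigma>"
        by (rule arith[OF mx my mpy])
      finally show "(\<integral>\<^sup>+ t \<in> \<sigma>. ennreal (t ^ Suc n) \<partial>P ((\<phi> ^^ Suc n) x)) = ennreal (m x / m ((\<phi>^^Suc n) x)) * emeasure (P x) \<sigma>"
        unfolding y_def by simp
    qed
  qed
  have partI: "\<forall>\<sigma> \<in> ?S. \<forall>n::nat. \<forall>x. emeasure M {x} > 0 \<longrightarrow>
            (\<integral>\<^sup>+ t \<in> \<sigma>. ennreal (t ^ n) \<partial>P ((\<phi> ^^ n) x))
              = hphi M (\<phi> ^^ n) ((\<phi> ^^ n) x) * emeasure (P x) \<sigma>"
    using main hn by simp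
  show ?thesis
  proof (intro conjI impI)
    show "\<forall>\<sigma> \<in> ?S. \<forall>n::nat. \<forall>x. emeasure M {x} > 0 \<longrightarrow>
            (\<integral>\<^sup>+ t \<in> \<sigma>. ennreal (t ^ n) \<partial>P ((\<phi> ^^ n) x))
              = hphi M (\<phi> ^^ n) ((\<phi> ^^ n) x) * emeasure (P x) \<sigma>" by (rule partI)
    assume allpos: "\<forall>x. emeasure M {x} > 0"
    show "\<forall>\<sigma> \<in> ?S. \<forall>n::nat. \<forall>x \<in> range (\<phi> ^^ n).
            (\<integral>\<^sup>+ t \<in> \<sigma>. ennreal (t ^ n) \<partial>P x)
              = hphi M (\<phi> ^^ n) x * emeasure (P (inv (\<phi> ^^ n) x)) \<sigma>"
    proof (intro ballI allI)
      fix \<sigma> n x assume \<sigma>: "\<sigma> \<in> ?S" and "x \<in> range (\<phi> ^^ n)"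
      then obtain z where z: "x = (\<phi>^^n) z" by auto
      have iz: "inv (\<phi> ^^ n) x = z" unfolding z using inj_fn[OF inj_phi, of n] by (rule inv_f_f)
      show "(\<integral>\<^sup>+ t \<in> \<sigma>. ennreal (t ^ n) \<partial>P x) = hphi M (\<phi> ^^ n) x * emeasure (P (inv (\<phi> ^^ n) x)) \<sigma>"
      proof -
        have "(\<integral>\<^sup>+ t \<in> \<sigma>. ennreal (t ^ n) \<partial>P ((\<phi>^^n) z)) = hphi M (\<phi> ^^ n) ((\<phi>^^n) z) * emeasure (P z) \<sigma>"
          using partI \<sigma> allpos by blast
        then show ?thesis using iz z by simp
      qed
    qed
  qed
qed

end
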